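(* Let $\Omega^*\subset\widehat{\mathbb C}$ be a domain with $\infty\in\Omega^*$ whose complementary components are uniformly fat. Then for each $\varepsilon>0$ there are at most finitely many components $B^*$ of $\widehat{\mathbb C}\setminus\Omega^*$ with $\mathrm{diam}(B^* )>\varepsilon$. In particular, at most countably many components of $\widehat{\mathbb C}\setminus\Omega^*$ are non-degenerate.
   Context: A measurable set $B\subset\mathbb C$ is $c$-fat ($c>0$) if $\mathrm{Area}(B\cap B(z,r))\ge cr^2$ for all $z\in B$ and $0<r\le\mathrm{diam}(B)$; single points are considered $c$-fat for every $c$. A family of sets is uniformly fat if every member is $c$-fat for one common $c>0$. *)

theory Defs
  imports "HOL-Analysis.Analysis"
begin

definition c_fat :: "real \<Rightarrow> complex set \<Rightarrow> bool" where
  "c_fat c B \<longleftrightarrow> (\<exists>z. B = {z}) \<or>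
     (B \<in> sets lebesgue \<and>
      (\<forall>z\<in>B. \<forall>r. 0 < r \<and> r \<le> diameter B \<longrightarrow>
          emeasure lebesgue (B \<inter> ball z r) \<ge> ennreal (c * r\<^sup>2)))"

definition uniformly_fat :: "complex set set \<Rightarrow> bool" where
  "uniformly_fat \<F> \<longleftrightarrow> (\<exists>c>0. \<forall>B\<in>\<F>. c_fat c B)"

end

theory Submission
  imports Defs
begin

lemma fin_part:
  fixes \<Omega> :: "complex set"
  assumes "open \<Omega>" and "bounded (- \<Omega>)"
    and "uniformly_fat (components (- \<Omega>))" and "\<epsilon> > 0"
  shows "finite {B \<in> components (- \<Omega>). diameter B > \<epsilon>}"
proof -
  let ?S = "{B \<in> components (- \<Omega>). diameter B > \<epsilon>}"
  obtain c where c: "c > 0" "\<And>B. B \<in> components (- \<Omega>) \<Longrightarrow> c_fat c B"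
    using assms(3) unfolding uniformly_fat_def by blast
  obtain R where R: "\<forall>x\<in>- \<Omega>. norm x \<le> R"
    using assms(2) bounded_iff by blast
  let ?K = "cball (0::complex) (R + \<epsilon>)"
  define m where "m = measure lebesgue ?K"
  have Km: "emeasure lebesgue ?K = ennreal m"
    unfolding m_def by (rule emeasure_eq_measure2[OF lmeasurable_cball])
  have bnd: "B \<in> components (- \<Omega>) \<Longrightarrow> bounded B" for B
    using assms(2) bounded_subset in_components_subset by blast
  have props: "B \<in> sets lebesgue \<and> (\<forall>z\<in>B. emeasure lebesgue (B \<inter> ball z \<epsilon>) \<ge> ennreal (c * \<epsilon>\<^sup>2))"
    if B: "B \<in> ?S" for B
  proof -
    have Bc: "B \<in> components (- \<Omega>)" and d: "diameter B > \<epsilon>" using B by auto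
    have "\<not> (\<exists>z. B = {z})" using d assms(4) by auto
    then show ?thesis using c(2)[OF Bc] d assms(4) unfolding c_fat_def by auto
  qed
  have ne: "B \<in> ?S \<Longrightarrow> B \<noteq> {}" for B using in_components_nonempty by auto
  define z where "z B = (SOME x. x \<in> B)" for B :: "complex set"
  have zB: "z B \<in> B" if hB: "B \<in> ?S" for B
  proof -
    obtain x where "x \<in> B" using ne[OF hB] by blast
    then show ?thesis unfolding z_def by (rule someI)
  qed
  define F where "F B = B \<inter> ball (z B) \<epsilon>" for B
  have card_bd: "real (card G) * (c * \<epsilon>\<^sup>2) \<le> m" if G: "G \<subseteq> ?S" "finite G" for G
  proof -
    have Fsets: "F ` G \<subseteq> sets lebesgue"
    proof (rule image_subsetI)
      fix B assume "B \<in> G"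
      then have "B \<in> sets lebesgue" using props G(1) by blast
      then show "F B \<in> sets lebesgue" unfolding F_def
        by (rule sets.Int[OF _ fmeasurableD[OF lmeasurable_ball]])
    qed
    have disj: "disjoint_family_on F G"
      unfolding disjoint_family_on_def F_def
    proof (intro ballI impI)
      fix A B assume "A \<in> G" "B \<in> G" "A \<noteq> B"
      then have "A \<inter> B = {}" using G(1) components_nonoverlap by blast
      then show "A \<inter> ball (z A) \<epsilon> \<inter> (B \<inter> ball (z B) \<epsilon>) = {}" by blast
    qed
    have sub: "(\<Union>B\<in>G. F B) \<subseteq> ?K"
    proof
      fix x assume "x \<in> (\<Union>B\<in>G. F B)"
      then obtain B where B: "B \<in> G" "x \<in> B" "dist (z B) x < \<epsilon>" unfolding F_def by auto
      have "z B \<in> - \<Omega>" using zB[of B] B G(1) in_components_subset by blast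
      then have "norm (z B) \<le> R" using R by auto
      have "norm x \<le> norm (z B) + dist (z B) x"
        using norm_triangle_ineq2[of x "z B"] by (simp add: dist_norm norm_minus_commute)
      then show "x \<in> ?K" using B(3) \<open>norm (z B) \<le> R\<close> by simp
    qed
    have "(\<Sum>B\<in>G. ennreal (c * \<epsilon>\<^sup>2)) \<le> (\<Sum>B\<in>G. emeasure lebesgue (F B))"
    proof (rule sum_mono)
      fix B assume "B \<in> G"
      then have hB: "B \<in> ?S" using G(1) by blast
      show "ennreal (c * \<epsilon>\<^sup>2) \<le> emeasure lebesgue (F B)"
        unfolding F_def using props[OF hB] zB[OF hB] by blast
    qed
    also have "\<dots> = emeasure lebesgue (\<Union>B\<in>G. F B)"
      by (rule sum_emeasure[OF Fsets disj G(2)])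
    also have "\<dots> \<le> emeasure lebesgue ?K"
      by (rule emeasure_mono[OF sub]) simp
    finally have "ennreal (real (card G) * (c * \<epsilon>\<^sup>2)) \<le> ennreal m"
      using Km c(1) by (simp add: ennreal_mult ennreal_of_nat_eq_real_of_nat)
    then show ?thesis
      using Km by (metis ennreal_le_iff measure_nonneg m_def)
  qed
  have ce: "c * \<epsilon>\<^sup>2 > 0" using c(1) assms(4) by simp
  have "card G \<le> nat \<lceil>m / (c * \<epsilon>\<^sup>2)\<rceil>" if "G \<subseteq> ?S" "finite G" for G
  proof -
    have "real (card G) \<le> m / (c * \<epsilon>\<^sup>2)"
      using card_bd[OF that] ce by (simp add: field_simps)
    then show ?thesis by linarith
  qed
  then show ?thesis using finite_if_finite_subsets_card_bdd by blast
qed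

theorem lemma4p1:
  fixes \<Omega> :: "complex set"
  assumes "open \<Omega>" and "connected \<Omega>" and "\<Omega> \<noteq> {}"
    and "bounded (- \<Omega>)"
    and "uniformly_fat (components (- \<Omega>))"
  shows "(\<forall>\<epsilon>>0. finite {B \<in> components (- \<Omega>). diameter B > \<epsilon>})
       \<and> countable {B \<in> components (- \<Omega>). \<not> (\<exists>z. B = {z})}"
proof -
  have fin: "\<forall>\<epsilon>>0. finite {B \<in> components (- \<Omega>). diameter B > \<epsilon>}"
    using fin_part[OF assms(1,4,5)] by blast
  have "{B \<in> components (- \<Omega>). \<not> (\<exists>z. B = {z})}
      \<subseteq> (\<Union>n. {B \<in> components (- \<Omega>). diameter B > 1 / real (Suc n)})"
  proof
    fix B assume B: "B \<in> {B \<in> components (- \<Omega>). \<not> (\<exists>z. B = {z})}"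
    then have Bc: "B \<in> components (- \<Omega>)" and ns: "\<not> (\<exists>z. B = {z})" by auto
    have "B \<noteq> {}" using Bc in_components_nonempty by blast
    then obtain x y where xy: "x \<in> B" "y \<in> B" "x \<noteq> y" using ns by blast
    have "bounded B" using assms(4) bounded_subset in_components_subset Bc by blast
    then have "dist x y \<le> diameter B" using xy diameter_bounded_bound by blast
    then have dp: "diameter B > 0" using xy(3) by (meson dist_pos_lt order_less_le_trans)
    then obtain n where "inverse (real (Suc n)) < diameter B" using reals_Archimedean by blast
    then show "B \<in> (\<Union>n. {B \<in> components (- \<Omega>). diameter B > 1 / real (Suc n)})"
      using Bc by (auto simp: inverse_eq_divide)
  qed
  moreover have "countable (\<Union>n. {B \<in> components (- \<Omega>). diameter B > 1 / real (Suc n)})"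
    using fin by (intro countable_UN) (auto intro: countable_finite)
  ultimately show ?thesis using fin countable_subset by blast
qed

end
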